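(* Let $\Omega=\{\Omega_1,\dots,\Omega_N\}$ be the vertex set of a directed weighted graph with (not necessarily symmetric) weight function $d$, let $1\le n<N$, and let $i,j\in\{1,\dots,n\}$. Let $x_1=MMJ(\Omega_i,\Omega_j~|~\Omega_{[1,n]})$, $t_1=MMJ(\Omega_i,\Omega_{n+1}~|~\Omega_{[1,n+1]})$, $t_2=MMJ(\Omega_{n+1},\Omega_j~|~\Omega_{[1,n+1]})$ and $x_2=\max(t_1,t_2)$. Then $MMJ(\Omega_i,\Omega_j~|~\Omega_{[1,n+1]})=\min(x_1,x_2)$.
   Context: $\Omega$ is a finite set of points indexed $\Omega_1,\dots,\Omega_N$, and $\Omega_{[1,n]}=\{\Omega_1,\dots,\Omega_n\}$. $d(x,y)\ge 0$ is the weight of the directed edge from $x$ to $y$ (possibly $d(x,y)\neq d(y,x)$). For a subset $S\subseteq\Omega$, a (directed) path from $i$ to $j$ in $S$ is a finite sequence of points of $S$ (at least two) starting at $i$ and ending at $j$, with no repeated points except that start and end may coincide when $i=j$. A jump of a path is $d(x,y)$ for consecutive points $x$ followed by $y$, and $max\_jump$ of a path is its largest jump. The Min-Max-Jump distance with context $S$ is $MMJ(i,j~|~S)=\min\{max\_jump(\epsilon): \epsilon \text{ a path from } i \text{ to } j \text{ in } S\}$ for $i,j\in S$, with $MMJ(i,i~|~S)=0$. *)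

theory Defs
  imports Complex_Main
begin

definition is_path :: "'a set \<Rightarrow> 'a \<Rightarrow> 'a \<Rightarrow> 'a list \<Rightarrow> bool" where
  "is_path S i j p \<longleftrightarrow> length p \<ge> 2 \<and> hd p = i \<and> last p = j \<and> set p \<subseteq> S \<and>
     (distinct p \<or> (i = j \<and> distinct (tl p)))"

definition max_jump :: "('a \<Rightarrow> 'a \<Rightarrow> real) \<Rightarrow> 'a list \<Rightarrow> real" where
  "max_jump d p = Max (set (map (\<lambda>(x, y). d x y) (zip p (tl p))))"

definition MMJ :: "('a \<Rightarrow> 'a \<Rightarrow> real) \<Rightarrow> 'a \<Rightarrow> 'a \<Rightarrow> 'a set \<Rightarrow> real" where
  "MMJ d i j S = (if i = j then 0 else Min {max_jump d p | p. is_path S i j p})"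

end

theory Submission
  imports Defs
begin

lemma succ_zip: "successively P p \<longleftrightarrow> (\<forall>(x,y)\<in>set (zip p (tl p)). P x y)"
proof (induction p rule: induct_list012)
  case (3 x y zs)
  then show ?case by auto
qed auto

lemma zip_ne: "length p \<ge> 2 \<Longrightarrow> zip p (tl p) \<noteq> []"
  by (cases p; cases "tl p") auto

lemma mj_le: "length p \<ge> 2 \<Longrightarrow> max_jump d p \<le> t \<longleftrightarrow> successively (\<lambda>x y. d x y \<le> t) p"
  unfolding max_jump_def succ_zip using zip_ne[of p]
  by (subst Max_le_iff) auto

lemma mj_ge: "length p \<ge> 2 \<Longrightarrow> (\<And>x y. d x y \<ge> 0) \<Longrightarrow> max_jump d p \<ge> 0"
proof -
  assume l: "length p \<ge> 2" and nn: "\<And>x y. d x y \<ge> 0"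
  obtain a where a: "a \<in> set (zip p (tl p))" using zip_ne[OF l] by (cases "zip p (tl p)") auto
  show ?thesis unfolding max_jump_def
    by (rule order.trans[OF _ Max_ge[where x="case a of (x,y) \<Rightarrow> d x y"]])
       (use a nn in \<open>auto split: prod.splits\<close>)
qed

lemma shortcut:
  "length p \<ge> 2 \<Longrightarrow> hd p = a \<Longrightarrow> last p = b \<Longrightarrow> a \<noteq> b \<Longrightarrow> successively P p \<Longrightarrow>
   \<exists>q. distinct q \<and> length q \<ge> 2 \<and> hd q = a \<and> last q = b \<and> set q \<subseteq> set p \<and> successively P q"
proof (induction "length p" arbitrary: p rule: less_induct)
  case less
  show ?case
  proof (cases "distinct p")
    case True then show ?thesis using less.prems by blast
  next
    case False
    then obtain xs ys zs y where p: "p = xs@[y]@ys@[y]@zs" using not_distinct_decomp by blast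
    define q where "q = xs @ [y] @ zs"
    have len: "length q < length p" using p q_def by simp
    have hd: "hd q = a" using less.prems(2) p q_def by (cases xs) auto
    have lst: "last q = b" using less.prems(3) p q_def by (cases zs) auto
    have l2: "length q \<ge> 2"
    proof (rule ccontr)
      assume "\<not> 2 \<le> length q"
      moreover have "q \<noteq> []" using q_def by simp
      ultimately obtain u where "q = [u]" by (cases q; cases "tl q") auto
      then show False using hd lst less.prems(4) by simp
    qed
    have s: "successively P q" using less.prems(5) unfolding p q_def
      by (auto simp: successively_append_iff successively_Cons)
    have "set q \<subseteq> set p" using p q_def by auto
    with less.hyps[OF len l2 hd lst less.prems(4) s] show ?thesis by blast
  qed
qed

definition W :: "('a \<Rightarrow> 'a \<Rightarrow> real) \<Rightarrow> 'a set \<Rightarrow> real \<Rightarrow> 'a \<Rightarrow> 'a \<Rightarrow> bool" where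
  "W d S t a b \<longleftrightarrow> (\<exists>p. length p \<ge> 2 \<and> hd p = a \<and> last p = b \<and> set p \<subseteq> S \<and>
     successively (\<lambda>x y. d x y \<le> t) p)"

lemma fin_paths:
  assumes "finite S"
  shows "finite {max_jump d p | p. is_path S a b p}"
proof -
  have "{p. is_path S a b p} \<subseteq> {xs. set xs \<subseteq> S \<and> length xs \<le> Suc (card S)}"
  proof
    fix p assume "p \<in> {p. is_path S a b p}"
    then have st: "set p \<subseteq> S" and dd: "distinct p \<or> distinct (tl p)"
      unfolding is_path_def by auto
    have c: "card (set p) \<le> card S" "card (set (tl p)) \<le> card S"
      proof -
      have "set (tl p) \<subseteq> set p" by (cases p) auto
      then show "card (set p) \<le> card S" "card (set (tl p)) \<le> card S"
        using st assms card_mono by (blast, metis order.trans card_mono assms)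
    qed
    from dd have "length p \<le> Suc (card S)"
    proof
      assume "distinct p" then show ?thesis using c distinct_card by fastforce
    next
      assume "distinct (tl p)" then have "length (tl p) \<le> card S" using c distinct_card by metis
      then show ?thesis by simp
    qed
    then show "p \<in> {xs. set xs \<subseteq> S \<and> length xs \<le> Suc (card S)}" using st by simp
  qed
  then have "finite {p. is_path S a b p}" using finite_lists_length_le[OF assms] finite_subset by blast
  then show ?thesis by (simp add: setcompr_eq_image)
qed

lemma MMJ_le_iff:
  assumes "finite S" "a \<in> S" "b \<in> S" "a \<noteq> b"
  shows "MMJ d a b S \<le> t \<longleftrightarrow> W d S t a b"
proof -
  have ne: "{max_jump d p | p. is_path S a b p} \<noteq> {}"
    using assms(2-4) unfolding is_path_def by (auto intro!: exI[of _ "[a,b]"])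
  have "MMJ d a b S \<le> t \<longleftrightarrow> (\<exists>p. is_path S a b p \<and> max_jump d p \<le> t)"
    using assms(4) unfolding MMJ_def by (simp add: Min_le_iff[OF fin_paths[OF assms(1)] ne]) blast
  also have "\<dots> \<longleftrightarrow> W d S t a b"
  proof
    assume "\<exists>p. is_path S a b p \<and> max_jump d p \<le> t"
    then show "W d S t a b" unfolding W_def is_path_def using mj_le by blast
  next
    assume "W d S t a b"
    then obtain p where p: "length p \<ge> 2" "hd p = a" "last p = b" "set p \<subseteq> S"
      "successively (\<lambda>x y. d x y \<le> t) p" unfolding W_def by blast
    from shortcut[OF p(1-3) assms(4) p(5)] obtain q where
      "distinct q \<and> length q \<ge> 2 \<and> hd q = a \<and> last q = b \<and> set q \<subseteq> set p \<and> successively (\<lambda>x y. d x y \<le> t) q"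
      by blast
    then show "\<exists>p. is_path S a b p \<and> max_jump d p \<le> t"
      using p(4) mj_le unfolding is_path_def by blast
  qed
  finally show ?thesis .
qed

lemma MMJ_nonneg:
  assumes "finite S" "a \<in> S" "b \<in> S" "\<And>x y. d x y \<ge> 0"
  shows "MMJ d a b S \<ge> 0"
proof (cases "a = b")
  case False
  have ne: "{max_jump d p | p. is_path S a b p} \<noteq> {}"
    using assms(2,3) False unfolding is_path_def by (auto intro!: exI[of _ "[a,b]"])
  have "\<forall>x\<in>{max_jump d p | p. is_path S a b p}. 0 \<le> x"
    unfolding is_path_def using mj_ge assms(4) by blast
  then show ?thesis using False unfolding MMJ_def
    by (simp add: Min_ge_iff[OF fin_paths[OF assms(1)] ne])
qed (simp add: MMJ_def)

lemma W_mono: "W d S t a b \<Longrightarrow> S \<subseteq> S' \<Longrightarrow> W d S' t a b"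
  unfolding W_def by blast

lemma W_trans: "W d S t a b \<Longrightarrow> W d S t b c \<Longrightarrow> W d S t a c"
proof -
  assume "W d S t a b" "W d S t b c"
  then obtain p q where p: "length p \<ge> 2" "hd p = a" "last p = b" "set p \<subseteq> S"
      "successively (\<lambda>x y. d x y \<le> t) p" and q: "length q \<ge> 2" "hd q = b" "last q = c" "set q \<subseteq> S"
      "successively (\<lambda>x y. d x y \<le> t) q" unfolding W_def by blast
  define q' where "q' = tl q"
  have q': "q = b # q'" "q' \<noteq> []" using q(1,2) unfolding q'_def by (cases q; auto)+
  have "successively (\<lambda>x y. d x y \<le> t) (p @ q')"
    using p(5) q(5) q' p(1,3) by (auto simp: successively_append_iff successively_Cons)
  moreover have "hd (p @ q') = a" "last (p @ q') = c" "length (p @ q') \<ge> 2" "set (p @ q') \<subseteq> S"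
    using p q q' by (auto simp: hd_append)
  ultimately show ?thesis unfolding W_def by blast
qed

lemma W_split:
  assumes "W d (insert z S) t a b" "a \<noteq> b" "a \<noteq> z" "b \<noteq> z"
  shows "W d S t a b \<or> (W d (insert z S) t a z \<and> W d (insert z S) t z b)"
proof -
  obtain p where p: "length p \<ge> 2" "hd p = a" "last p = b" "set p \<subseteq> insert z S"
      "successively (\<lambda>x y. d x y \<le> t) p" using assms(1) unfolding W_def by blast
  show ?thesis
  proof (cases "z \<in> set p")
    case False then show ?thesis using p unfolding W_def by blast
  next
    case True
    then obtain p1 p2 where sp: "p = p1 @ z # p2" by (meson split_list)
    have "p1 \<noteq> []" using sp p(2) assms(3) by auto
    moreover have "p2 \<noteq> []" using sp p(3) assms(4) by auto
    ultimately have l1: "length (p1@[z]) \<ge> 2" and l2: "length (z#p2) \<ge> 2"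
      by (cases p1; simp; cases p2; simp)+
    have "successively (\<lambda>x y. d x y \<le> t) (p1@[z])" "successively (\<lambda>x y. d x y \<le> t) (z#p2)"
      using p(5) unfolding sp by (auto simp: successively_append_iff successively_Cons)
    moreover have "hd (p1@[z]) = a" "last (z#p2) = b" using p(2,3) sp \<open>p1 \<noteq> []\<close> \<open>p2 \<noteq> []\<close>
      by (auto simp: hd_append)
    moreover have "set (p1@[z]) \<subseteq> insert z S" "set (z#p2) \<subseteq> insert z S" using p(4) sp by auto
    ultimately have "W d (insert z S) t a z" "W d (insert z S) t z b"
      unfolding W_def using l1 l2 by (metis last_snoc, metis list.sel(1))
    then show ?thesis by blast
  qed
qed

theorem theorem6p2:
  fixes \<Omega> :: "nat \<Rightarrow> 'a" and d :: "'a \<Rightarrow> 'a \<Rightarrow> real" and N n i j :: nat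
  assumes inj: "inj_on \<Omega> {1..N}"
    and d_nonneg: "\<And>x y. d x y \<ge> 0"
    and n: "1 \<le> n" "n < N"
    and i: "i \<in> {1..n}" and j: "j \<in> {1..n}"
  shows "MMJ d (\<Omega> i) (\<Omega> j) (\<Omega> ` {1..Suc n}) =
         min (MMJ d (\<Omega> i) (\<Omega> j) (\<Omega> ` {1..n}))
             (max (MMJ d (\<Omega> i) (\<Omega> (Suc n)) (\<Omega> ` {1..Suc n}))
                  (MMJ d (\<Omega> (Suc n)) (\<Omega> j) (\<Omega> ` {1..Suc n})))"
proof -
  define S where "S = \<Omega> ` {1..n}"
  define z where "z = \<Omega> (Suc n)"
  have S': "\<Omega> ` {1..Suc n} = insert z S" unfolding S_def z_def
    by (simp add: atLeastAtMostSuc_conv)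
  have zi: "\<Omega> i \<noteq> z" and zj: "\<Omega> j \<noteq> z" unfolding z_def
    using inj i j n by (auto dest: inj_onD[where x=i and y="Suc n"] inj_onD[where x=j and y="Suc n"])
  have fS: "finite S" unfolding S_def by simp
  have iS: "\<Omega> i \<in> S" and jS: "\<Omega> j \<in> S" using i j unfolding S_def by auto
  note F = MMJ_le_iff[OF finite.insertI[OF fS]] MMJ_le_iff[OF fS]
  have "MMJ d (\<Omega> i) (\<Omega> j) (insert z S) =
         min (MMJ d (\<Omega> i) (\<Omega> j) S)
             (max (MMJ d (\<Omega> i) z (insert z S)) (MMJ d z (\<Omega> j) (insert z S)))"
  proof (cases "\<Omega> i = \<Omega> j")
    case True
    have "MMJ d (\<Omega> i) z (insert z S) \<ge> 0"
      using MMJ_nonneg[OF finite.insertI[OF fS], where a="\<Omega> i" and b=z and d=d] iS d_nonneg by auto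
    then show ?thesis using True by (simp add: MMJ_def)
  next
    case False
    have "\<forall>t. MMJ d (\<Omega> i) (\<Omega> j) (insert z S) \<le> t \<longleftrightarrow>
        min (MMJ d (\<Omega> i) (\<Omega> j) S) (max (MMJ d (\<Omega> i) z (insert z S)) (MMJ d z (\<Omega> j) (insert z S))) \<le> t"
    proof
      fix t
      show "MMJ d (\<Omega> i) (\<Omega> j) (insert z S) \<le> t \<longleftrightarrow>
        min (MMJ d (\<Omega> i) (\<Omega> j) S) (max (MMJ d (\<Omega> i) z (insert z S)) (MMJ d z (\<Omega> j) (insert z S))) \<le> t"
        using F(1)[where a="\<Omega> i" and b="\<Omega> j" and d=d and t=t] F(1)[where a="\<Omega> i" and b=z and d=d and t=t]
          F(1)[where a=z and b="\<Omega> j" and d=d and t=t] F(2)[where a="\<Omega> i" and b="\<Omega> j" and d=d and t=t]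
          iS jS zi zj False W_split[of d z S t "\<Omega> i" "\<Omega> j"] W_mono[of d S t "\<Omega> i" "\<Omega> j" "insert z S"]
          W_trans[of d "insert z S" t "\<Omega> i" z "\<Omega> j"]
        by (auto simp: min_le_iff_disj)
    qed
    then show ?thesis by (metis order.antisym order.refl)
  qed
  then show ?thesis unfolding S' S_def z_def .
qed

end
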